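(* Let $k\ge4$ be an integer, $\eta\in[\eta_{k+1},\eta_k)$, and $j\ge k$ an integer. Then $\angle 1z_jw_1\in(0,\pi)$.
   Context: For $\eta\in(0,\pi/3)$ let $a=\frac{e^{-i\eta}}{2\cos\eta}$, $c=\frac{1}{1-|a|^4}$, $z_j=ca^{j+1}$, $w_1=1-c|a|^2a$. For $u,v,w\in\mathbb{C}$, $\angle uvw=\arg\frac{w-v}{u-v}$ with $\arg$ taking values in $[0,2\pi)$. For integers $k\ge1$ let $\Phi_k(\eta)=(1-|a|^4)\sin((k-1)\eta)-|a|^3\sin((k-2)\eta)+|a|^k\sin\eta$; for each $k\ge4$, $\Phi_k$ has a unique zero in $(\pi/k,\pi/(k-1))$, denoted $\eta_k$. *)

theory Defs
  imports "HOL-Analysis.Analysis"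
begin

definition aa :: "real \<Rightarrow> complex" where
  "aa \<eta> = cis (- \<eta>) / complex_of_real (2 * cos \<eta>)"

definition cc :: "real \<Rightarrow> real" where
  "cc \<eta> = 1 / (1 - cmod (aa \<eta>) ^ 4)"

definition zz :: "real \<Rightarrow> nat \<Rightarrow> complex" where
  "zz \<eta> j = complex_of_real (cc \<eta>) * aa \<eta> ^ (j + 1)"

definition w1 :: "real \<Rightarrow> complex" where
  "w1 \<eta> = 1 - complex_of_real (cc \<eta> * cmod (aa \<eta>) ^ 2) * aa \<eta>"

definition arg2pi :: "complex \<Rightarrow> real" where
  "arg2pi z = (if Arg z < 0 then Arg z + 2 * pi else Arg z)"

definition angle3 :: "complex \<Rightarrow> complex \<Rightarrow> complex \<Rightarrow> real" where
  "angle3 u v w = arg2pi ((w - v) / (u - v))"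

definition Phi :: "nat \<Rightarrow> real \<Rightarrow> real" where
  "Phi k \<eta> = (1 - cmod (aa \<eta>) ^ 4) * sin ((real k - 1) * \<eta>)
              - cmod (aa \<eta>) ^ 3 * sin ((real k - 2) * \<eta>)
              + cmod (aa \<eta>) ^ k * sin \<eta>"

definition eta_k :: "nat \<Rightarrow> real" where
  "eta_k k = (THE \<eta>. \<eta> \<in> {pi / real k <..< pi / (real k - 1)} \<and> Phi k \<eta> = 0)"

end

theory Submission
  imports Defs
begin

lemma im_key:
  fixes q p e t :: real
  shows "Im ((1 - of_real q * cis (-e) - of_real p * cis (-t)) * cnj (1 - of_real p * cis (-t)))
     = q * (sin e + p * sin (t - e))"
  by (simp add: sin_diff algebra_simps)

lemma abs_sin_nat_mult: "\<bar>sin (real n * x)\<bar> \<le> real n * \<bar>sin x\<bar>"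
proof (induction n)
  case 0 then show ?case by simp
next
  case (Suc n)
  have "sin (real (Suc n) * x) = sin (real n * x) * cos x + cos (real n * x) * sin x"
    by (simp add: distrib_right sin_add)
  also have "\<bar>\<dots>\<bar> \<le> \<bar>sin (real n * x)\<bar> * \<bar>cos x\<bar> + \<bar>cos (real n * x)\<bar> * \<bar>sin x\<bar>"
    by (metis abs_mult abs_triangle_ineq)
  also have "\<dots> \<le> \<bar>sin (real n * x)\<bar> * 1 + 1 * \<bar>sin x\<bar>"
    by (intro add_mono mult_left_mono mult_right_mono) auto
  finally show ?case using Suc by (simp add: distrib_right)
qed

lemma pow2_bound: "n \<ge> 4 \<Longrightarrow> 16 * (real n)^2 < 9 * 2^(n+1)"
proof (induction n rule: dec_induct)
  case base then show ?case by simp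
next
  case (step n)
  have "16 * (real (Suc n))^2 = 16 * (real n)^2 + 32 * real n + 16" by (simp add: power2_eq_square algebra_simps)
  also have "\<dots> \<le> 2 * (16 * (real n)^2)" using step(1)
  proof -
    have "real n \<ge> 4" using step(1) by simp
    then have "real n * real n \<ge> 4 * real n" by (intro mult_right_mono) auto
    then show ?thesis using \<open>real n \<ge> 4\<close> unfolding power2_eq_square by linarith
  qed
  also have "\<dots> < 2 * (9 * 2^(n+1))" using step(3) by simp
  finally show ?case by simp
qed

lemma aa_eq: "cos e > 0 \<Longrightarrow> aa e = of_real (1 / (2 * cos e)) * cis (-e)"
  unfolding aa_def by (simp add: field_simps)

lemma cmod_aa: "cos e > 0 \<Longrightarrow> cmod (aa e) = 1 / (2 * cos e)"
  by (simp add: aa_def norm_divide norm_mult)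

lemma key_ineq:
  fixes e :: real and j :: nat
  assumes e0: "0 < e" and e1: "e < pi/3" and x4: "cos e ^ 4 > 1/8" and j4: "j \<ge> 4"
  defines "r \<equiv> 1 / (2 * cos e)"
  defines "c \<equiv> 1 / (1 - r^4)"
  shows "sin e + c * r^(j+1) * sin (real j * e) > 0"
proof -
  define x where "x = cos e"
  define s where "s = sin e"
  have xh: "x > 1/2" unfolding x_def
  proof -
    have "cos (pi/3) < cos e" using e0 e1 by (intro cos_monotone_0_pi) auto
    then show "cos e > 1/2" by (simp add: cos_60)
  qed
  have xle: "x \<le> 1" unfolding x_def by simp
  have s0: "s > 0" unfolding s_def using e0 e1 by (intro sin_gt_zero) auto
  have sx: "s^2 = 1 - x^2" unfolding s_def x_def by (simp add: sin_squared_eq)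
  have y4: "x^4 > 1/8" using x4 x_def by simp
  have r_eq: "r = 1/(2*x)" unfolding r_def x_def ..
  have r0: "r > 0" and r1: "r < 1" using xh by (auto simp: r_eq field_simps)
  have r4: "r^4 = 1/(16*x^4)" by (simp add: r_eq power_divide power_mult_distrib)
  have r4l: "r^4 < 1/2"
  proof -
    have "1/(16*x^4) < 1/2" using y4 by (intro divide_strict_left_mono) auto
    then show ?thesis unfolding r4 .
  qed
  have c_eq: "c = 16*x^4/(16*x^4 - 1)" unfolding c_def r4 using y4 xh by (simp add: field_simps)
  have c0: "c > 0" unfolding c_def using r4l by simp
  consider "j = 4" | "j = 5" | "j \<ge> 6" using j4 by linarith
  then show ?thesis
  proof cases
    case 1
    have s4: "sin (real j * e) = 4 * s * x * (2*x^2 - 1)"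
    proof -
      have "sin (4 * e) = sin (2 * (2 * e))" by simp
      also have "\<dots> = 2 * sin (2*e) * cos (2*e)" by (rule sin_double)
      also have "\<dots> = 4 * s * x * (2*x^2 - 1)" by (simp add: sin_double cos_double_cos s_def x_def)
      finally show ?thesis using 1 by simp
    qed
    have cr: "c * r^(j+1) = 1 / (2*x*(16*x^4-1))"
    proof -
      have "16*x^4 - 1 \<noteq> 0" using y4 by simp
      moreover have "x \<noteq> 0" using xh by simp
      ultimately show ?thesis unfolding c_eq r_eq 1 by (simp add: field_simps power_divide) algebra
    qed
    have "sin e + c * r^(j+1) * sin (real j * e) = s + 1 / (2*x*(16*x^4-1)) * (4 * s * x * (2*x^2 - 1))"
      by (simp only: cr s4 s_def)
    also have "\<dots> = s * (1 + 2*(2*x^2-1)/(16*x^4-1))"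
      using xh y4 by (simp add: field_simps)
    also have "\<dots> = s * ((16*x^4 + 4*x^2 - 3)/(16*x^4-1))" using y4 by (simp add: field_simps)
    also have "\<dots> > 0"
    proof -
      have "(1/2)^2 < x^2" using xh by (intro power_strict_mono) auto
      then have "16*x^4 + 4*x^2 - 3 > 0" using y4 by (simp add: power_divide)
      then show ?thesis using s0 y4 by (intro mult_pos_pos divide_pos_pos) auto
    qed
    finally show ?thesis .
  next
    case 2
    have s5: "sin (real j * e) = s * (16*x^4 - 12*x^2 + 1)"
    proof -
      have h1: "sin (4*e) = 2 * sin (2*e) * cos (2*e)" using sin_double[of "2*e"] by simp
      have h2: "cos (4*e) = 2 * (cos (2*e))^2 - 1" using cos_double_cos[of "2*e"] by simp
      have "sin (5 * e) = sin (4*e + e)" by simp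
      also have "\<dots> = sin (4*e) * cos e + cos (4*e) * sin e" by (rule sin_add)
      also have "\<dots> = 2 * (2 * s * x) * (2*x^2-1) * x + (2 * (2*x^2-1)^2 - 1) * s"
        unfolding h1 h2 by (simp add: sin_double cos_double_cos s_def x_def)
      also have "\<dots> = s * (16*x^4 - 12*x^2 + 1)" by (simp add: power2_eq_square algebra_simps) (simp add: eval_nat_numeral)
      finally show ?thesis using 2 by simp
    qed
    have cr: "c * r^(j+1) = 1 / (4*x^2*(16*x^4-1))"
    proof -
      have "16*x^4 - 1 \<noteq> 0" using y4 by simp
      moreover have "x \<noteq> 0" using xh by simp
      ultimately have "(16*x^4/(16*x^4 - 1)) * (1/(2*x))^6 * (4*x^2*(16*x^4-1)) = 1"
        by (simp add: field_simps power_divide) algebra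
      moreover have "4*x^2*(16*x^4-1) \<noteq> 0" using \<open>16*x^4 - 1 \<noteq> 0\<close> \<open>x \<noteq> 0\<close> by simp
      ultimately show ?thesis unfolding c_eq r_eq 2 by (simp add: eq_divide_eq)
    qed
    have "sin e + c * r^(j+1) * sin (real j * e) = s + 1 / (4*x^2*(16*x^4-1)) * (s * (16*x^4 - 12*x^2 + 1))"
      by (simp only: cr s5 s_def)
    also have "\<dots> = s * ((64*x^6 + 16*x^4 - 16*x^2 + 1)/(4*x^2*(16*x^4-1)))"
    proof -
      have "4*x^2*(16*x^4-1) \<noteq> 0" using xh y4 by simp
      then show ?thesis by (simp add: field_simps)
    qed
    also have "\<dots> > 0"
    proof -
      define y where "y = x^2"
      have yy: "y^2 > 1/8" using y4 by (simp add: y_def power_mult[symmetric])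
      have ylo: "y > 0.3535"
      proof (rule ccontr)
        assume "\<not> ?thesis"
        moreover have "y \<ge> 0" by (simp add: y_def)
        ultimately have "y^2 \<le> 0.3535^2" by (intro power_mono) auto
        then show False using yy by (simp add: power_divide)
      qed
      define y0 :: real where "y0 = 0.3535"
      have t3: "y^3 \<ge> 3*y0^2*y - 2*y0^3"
      proof -
        have "(y-y0)^2*(y+2*y0) \<ge> 0" using ylo unfolding y0_def by simp
        moreover have "(y-y0)^2*(y+2*y0) = y^3 - (3*y0^2*y - 2*y0^3)"
          by (simp add: power2_eq_square power3_eq_cube algebra_simps)
        ultimately show ?thesis by simp
      qed
      have t2: "y^2 \<ge> 2*y0*y - y0^2"
      proof -
        have "(y-y0)^2 \<ge> 0" by simp
        moreover have "(y-y0)^2 = y^2 - (2*y0*y - y0^2)"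
          by (simp add: power2_eq_square algebra_simps)
        ultimately show ?thesis by simp
      qed
      have "64*y^3 + 16*y^2 - 16*y + 1 > 0" using t3 t2 ylo unfolding y0_def by (simp add: power_divide)
      then have "64*x^6 + 16*x^4 - 16*x^2 + 1 > 0" by (simp add: y_def power_mult[symmetric])
      moreover have "4*x^2*(16*x^4-1) > 0" using xh y4 by simp
      ultimately show ?thesis using s0 y4 by (intro mult_pos_pos divide_pos_pos) auto
    qed
    finally show ?thesis .
  next
    case 3
    show ?thesis
    proof (cases "x^2 \<ge> 1/2")
      case True
      have r2: "r^2 \<le> 1/2" using True xh by (simp add: r_eq power_divide power_mult_distrib field_simps)
      have r4b: "r^4 \<le> 1/4"
      proof -
        have "r^4 = (r^2)^2" by simp
        also have "\<dots> \<le> (1/2)^2" using r2 by (intro power_mono) auto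
        finally show ?thesis by (simp add: power_divide)
      qed
      have cb: "c \<le> 4/3" unfolding c_def using r4b r4l by (simp add: field_simps)
      have rj: "(r^(j+1))^2 \<le> (1/2)^(j+1)"
      proof -
        have "(r^(j+1))^2 = (r^2)^(j+1)" by (simp only: power_mult[symmetric] mult.commute)
        also have "\<dots> \<le> (1/2)^(j+1)" using r2 by (intro power_mono) auto
        finally show ?thesis .
      qed
      have pb: "16 * (real j)^2 < 9 * 2^(j+1)" using pow2_bound j4 by blast
      have "(c * r^(j+1) * real j)^2 = c^2 * (r^(j+1))^2 * (real j)^2" by (simp add: power_mult_distrib)
      also have "\<dots> \<le> (4/3)^2 * (1/2)^(j+1) * (real j)^2"
        using cb c0 rj by (intro mult_mono power_mono) auto
      also have "\<dots> < 1"
      proof -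
        have "(4/3)^2 * (1/2)^(j+1) * (real j)^2 = (16 * (real j)^2) / (9 * 2^(j+1))"
          by (simp add: power_divide field_simps)
        also have "\<dots> < 1" using pb by simp
        finally show ?thesis .
      qed
      finally have lt1sq: "(c * r^(j+1) * real j)^2 < 1" .
      have lt1: "c * r^(j+1) * real j < 1"
      proof (rule ccontr)
        assume "\<not> ?thesis"
        then have "1 \<le> c * r^(j+1) * real j" by simp
        then have "1^2 \<le> (c * r^(j+1) * real j)^2" by (intro power_mono) auto
        then show False using lt1sq by simp
      qed
      have sj: "\<bar>sin (real j * e)\<bar> \<le> real j * s" using abs_sin_nat_mult[of j e] s0 by (simp add: s_def)
      have cp: "c * r^(j+1) > 0" using c0 r0 by simp
      have "c * r^(j+1) * sin (real j * e) \<ge> - (c * r^(j+1) * (real j * s))"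
      proof -
        have "- sin (real j * e) \<le> real j * s" using sj by linarith
        then have "c * r^(j+1) * (- sin (real j * e)) \<le> c * r^(j+1) * (real j * s)"
          using cp by (intro mult_left_mono) auto
        then show ?thesis by simp
      qed
      moreover have "c * r^(j+1) * (real j * s) < s"
      proof -
        have "(c * r^(j+1) * real j) * s < 1 * s" using lt1 s0 by (intro mult_strict_right_mono) auto
        then show ?thesis by (simp add: mult.assoc)
      qed
      ultimately show ?thesis by (simp add: s_def)
    next
      case False
      have s2: "s^2 > 1/2" using False sx by simp
      have s4: "s^4 > 1/4"
      proof -
        have "(1/2)^2 < (s^2)^2" using s2 by (intro power_strict_mono) auto
        then show ?thesis by (simp add: power_divide)
      qed
      have c2: "c < 2" unfolding c_def using r4l by (simp add: field_simps)
      have rj: "r^(j+1) \<le> r^7" using 3 r0 r1 by (intro power_decreasing) auto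
      have "c * r^(j+1) \<le> c * r^7" using rj c0 by simp
      also have "\<dots> < 2 * r^7" using c2 r0 by simp
      also have "\<dots> = 2 * r^4 * r^3" by simp
      also have "\<dots> < r^3" using r4l r0 by simp
      finally have cr: "c * r^(j+1) < r^3" .
      have "(r^3)^4 < s^4"
      proof -
        have "(r^3)^4 = (r^4)^3" by (simp only: power_mult[symmetric] mult.commute)
        also have "\<dots> < (1/2)^3" using r4l r0 by (intro power_strict_mono) auto
        finally show ?thesis using s4 by (simp add: power_divide)
      qed
      then have r3s: "r^3 < s" using s0 r0
        using power_less_imp_less_base[of "r^3" 4 s] by simp
      have sin1: "sin (real j * e) \<ge> -1" by simp
      have cp: "c * r^(j+1) > 0" using c0 r0 by simp
      have "c * r^(j+1) * sin (real j * e) \<ge> - (c * r^(j+1))"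
      proof -
        have "c * r^(j+1) * (-1) \<le> c * r^(j+1) * sin (real j * e)"
          using sin1 cp by (intro mult_left_mono) auto
        then show ?thesis by simp
      qed
      then show ?thesis using cr r3s by (simp add: s_def)
    qed
  qed
qed


lemma geo:
  fixes e :: real and j :: nat
  assumes e0: "0 < e" and e1: "e < pi/3" and x4: "cos e ^ 4 > 1/8" and j4: "j \<ge> 4"
  shows "angle3 1 (zz e j) (w1 e) \<in> {0<..<pi}"
proof -
  define r where "r = 1 / (2 * cos e)"
  define c where "c = 1 / (1 - r^4)"
  have cpos: "cos e > 0" using e0 e1 by (intro cos_gt_zero_pi) auto
  have aeq: "aa e = of_real r * cis (-e)" unfolding r_def using aa_eq[OF cpos] .
  have ceq: "cc e = c" unfolding cc_def c_def r_def using cmod_aa[OF cpos] by simp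
  have ma: "cmod (aa e) = r" unfolding r_def using cmod_aa[OF cpos] .
  have zeq: "zz e j = of_real (c * r^(j+1)) * cis (- (real (j+1) * e))"
  proof -
    have "zz e j = of_real c * (of_real r * cis (-e))^(j+1)" unfolding zz_def ceq aeq ..
    also have "\<dots> = of_real c * of_real (r^(j+1)) * cis (-e)^(j+1)"
      by (simp add: power_mult_distrib)
    also have "\<dots> = of_real (c * r^(j+1)) * cis (real (j+1) * (-e))"
      using Complex.DeMoivre[of "-e" "j+1"] by (simp only: of_real_mult of_real_power)
    also have "\<dots> = of_real (c * r^(j+1)) * cis (- (real (j+1) * e))"
      by simp
    finally show ?thesis .
  qed
  have weq: "w1 e = 1 - of_real (c * r^3) * cis (-e)"
  proof -
    have "w1 e = 1 - of_real (c * r^2) * (of_real r * cis (-e))" unfolding w1_def ceq ma unfolding aeq ..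
    also have "\<dots> = 1 - of_real (c * r^3) * cis (-e)" by (simp add: power2_eq_square power3_eq_cube)
    finally show ?thesis .
  qed
  define A where "A = w1 e - zz e j"
  define B where "B = 1 - zz e j"
  have "Im (A * cnj B) = c * r^3 * (sin e + c * r^(j+1) * sin (real (j+1) * e - e))"
    unfolding A_def B_def zeq weq using im_key[of "c * r^3" e "c * r^(j+1)" "real (j+1) * e"]
    by (simp add: algebra_simps)
  also have "real (j+1) * e - e = real j * e" by (simp add: algebra_simps)
  finally have imAB: "Im (A * cnj B) = c * r^3 * (sin e + c * r^(j+1) * sin (real j * e))" .
  have pos1: "sin e + c * r^(j+1) * sin (real j * e) > 0"
    using key_ineq[OF e0 e1 x4 j4] unfolding r_def c_def .
  have r0: "r > 0" unfolding r_def using cpos by simp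
  have r1: "r < 1"
  proof -
    have "cos (pi/3) < cos e" using e0 e1 by (intro cos_monotone_0_pi) auto
    then have "cos e > 1/2" by (simp add: cos_60)
    then show ?thesis unfolding r_def by (simp add: field_simps)
  qed
  have "r^4 < 1" using r0 r1 by (simp add: power_less_one_iff)
  then have c0: "c > 0" unfolding c_def by simp
  have imp: "Im (A * cnj B) > 0" unfolding imAB using c0 r0 pos1 by simp
  then have B0: "B \<noteq> 0" by auto
  have "Im (A / B) = Im (A * cnj B) / (cmod B)^2"
    by (subst complex_div_cnj) (simp flip: of_real_power)
  also have "\<dots> > 0" using imp B0 by simp
  finally have "Im (A / B) > 0" .
  then have "0 < Arg (A / B) \<and> Arg (A / B) < pi" using Arg_lt_pi by blast
  then show ?thesis unfolding angle3_def arg2pi_def A_def B_def by auto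
qed

definition F :: "nat \<Rightarrow> real \<Rightarrow> real" where
  "F k e = (1 - (1/(2*cos e))^4) * sin ((real k - 1) * e)
              - (1/(2*cos e))^3 * sin ((real k - 2) * e)
              + (1/(2*cos e))^k * sin e"

lemma Phi_F: "cos e > 0 \<Longrightarrow> Phi k e = F k e"
  unfolding Phi_def F_def using cmod_aa by simp

lemma F_cont: "cos e \<noteq> 0 \<Longrightarrow> isCont (F k) e"
  unfolding F_def by (intro continuous_intros) auto

lemma cos_lb: "cos (x::real) \<ge> 1 - x^2/2"
proof -
  have "cos x = cos (2 * (x/2))" by simp
  also have "\<dots> = 1 - 2 * (sin (x/2))^2" by (rule cos_double_sin)
  finally have c: "cos x = 1 - 2 * (sin (x/2))^2" .
  have "\<bar>sin (x/2)\<bar> \<le> \<bar>x/2\<bar>" by (rule abs_sin_x_le_abs_x)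
  then have "(sin (x/2))^2 \<le> (x/2)^2" by (metis abs_le_square_iff)
  then show ?thesis unfolding c by (simp add: power_divide)
qed

lemma F_left:
  assumes k: "k \<ge> 4"
  shows "F k (pi / real k) > 0"
proof -
  define x where "x = cos (pi / real k)"
  define s where "s = sin (pi / real k)"
  define r where "r = 1 / (2 * x)"
  have kpos: "real k > 0" using k by simp
  have pk: "pi / real k \<le> pi / 4" using k by (intro divide_left_mono) auto
  have pk0: "0 < pi / real k" using kpos by simp
  have xge: "x \<ge> sqrt 2 / 2" unfolding x_def
    using cos_monotone_0_pi_le[of "pi / real k" "pi/4"] pk pk0 by (simp add: cos_45)
  have "sqrt 2 / 2 > (0::real)" by simp
  then have x0: "x > 0" using xge by linarith
  have x2: "x^2 \<ge> 1/2"
  proof -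
    have "(sqrt 2 / 2)^2 \<le> x^2" using xge by (intro power_mono) auto
    then show ?thesis by (simp add: power_divide)
  qed
  have "pi/4 < pi" by simp
  then have s0: "s > 0" unfolding s_def using pk0 pk by (intro sin_gt_zero) linarith+
  have e1: "sin ((real k - 1) * (pi / real k)) = s"
  proof -
    have "(real k - 1) * (pi / real k) = pi - pi / real k" using kpos by (simp add: field_simps)
    then show ?thesis by (simp add: s_def)
  qed
  have e2: "sin ((real k - 2) * (pi / real k)) = 2 * s * x"
  proof -
    have "(real k - 2) * (pi / real k) = pi - 2 * (pi / real k)" using kpos by (simp add: field_simps)
    then have "sin ((real k - 2) * (pi / real k)) = sin (2 * (pi / real k))" by simp
    then show ?thesis unfolding sin_double s_def x_def by simp
  qed
  have r0: "r > 0" unfolding r_def using x0 by simp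
  have r2: "r^2 \<le> 1/2" unfolding r_def using x2 x0 by (simp add: power_divide field_simps)
  have r4: "r^4 \<le> 1/4"
  proof -
    have "r^4 = (r^2)^2" by simp
    also have "\<dots> \<le> (1/2)^2" using r2 by (intro power_mono) auto
    finally show ?thesis by (simp add: power_divide)
  qed
  have rx: "r^3 * (2 * x) = r^2" unfolding r_def using x0 by (simp add: power3_eq_cube power2_eq_square field_simps)
  have "F k (pi / real k) = (1 - r^4) * s - r^3 * (2 * s * x) + r^k * s"
    unfolding F_def e1 e2 r_def x_def s_def ..
  also have "\<dots> = s * (1 - r^4 - r^3 * (2 * x) + r^k)" by (simp add: algebra_simps)
  also have "\<dots> = s * (1 - r^4 - r^2 + r^k)" by (simp add: rx)
  also have "\<dots> > 0"
  proof -
    have "r^k > 0" using r0 by simp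
    then have "1 - r^4 - r^2 + r^k > 0" using r2 r4 by linarith
    then show ?thesis using s0 by simp
  qed
  finally show ?thesis .
qed

lemma F_right:
  assumes k: "k \<ge> 5"
  shows "F k (pi / (real k - 1)) < 0"
proof -
  define e where "e = pi / (real k - 1)"
  define s where "s = sin e"
  define r where "r = 1 / (2 * cos e)"
  have k1: "real k - 1 \<ge> 4" using k by simp
  have pk: "e \<le> pi / 4" unfolding e_def using k1 by (intro divide_left_mono) auto
  have pk0: "0 < e" unfolding e_def using k1 by simp
  have cge: "cos e > 1/2"
    using cos_monotone_0_pi[of e "pi/3"] pk pk0 by (simp add: cos_60)
  have s0: "s > 0" unfolding s_def using pk0 pk by (intro sin_gt_zero) auto
  have r0: "r > 0" and r1: "r < 1" unfolding r_def using cge by (auto simp: field_simps)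
  have e1: "sin ((real k - 1) * e) = 0" unfolding e_def using k1 by simp
  have e2: "sin ((real k - 2) * e) = s"
  proof -
    have "(real k - 2) * e = pi - e" unfolding e_def using k1 by (simp add: field_simps)
    then show ?thesis by (simp add: s_def)
  qed
  have rk: "r^k < r^3" using r0 r1 k by (intro power_strict_decreasing) auto
  have "F k e = s * (r^k - r^3)" unfolding F_def e1 e2 r_def[symmetric] s_def[symmetric]
    by (simp add: algebra_simps)
  also have "\<dots> < 0" using s0 rk by (simp add: mult_pos_neg)
  finally show ?thesis unfolding e_def .
qed

lemma F_exists:
  assumes k: "k \<ge> 5"
  shows "\<exists>e. pi / real k < e \<and> e < pi / (real k - 1) \<and> F k e = 0"
proof -
  have k1: "real k - 1 \<ge> 4" using k by simp
  have ab: "pi / real k \<le> pi / (real k - 1)" using k1 by (intro divide_left_mono) auto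
  have cont: "\<forall>x. pi / real k \<le> x \<and> x \<le> pi / (real k - 1) \<longrightarrow> isCont (F k) x"
  proof (intro allI impI F_cont)
    fix x assume x: "pi / real k \<le> x \<and> x \<le> pi / (real k - 1)"
    have "pi / (real k - 1) \<le> pi / 4" using k1 by (intro divide_left_mono) auto
    moreover have "0 < pi / real k" using k by simp
    ultimately have "0 < x" "x < pi/2" using x pi_gt_zero by linarith+
    then have "cos x > 0" by (intro cos_gt_zero_pi) auto
    then show "cos x \<noteq> 0" by simp
  qed
  have "\<exists>x. pi / real k \<le> x \<and> x \<le> pi / (real k - 1) \<and> F k x = 0"
    using F_left[of k] F_right[OF k] k ab cont by (intro IVT2) auto
  then obtain x where x: "pi / real k \<le> x" "x \<le> pi / (real k - 1)" "F k x = 0" by blast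
  have "x \<noteq> pi / real k" using F_left[of k] k x(3) by auto
  moreover have "x \<noteq> pi / (real k - 1)" using F_right[OF k] x(3) by auto
  ultimately show ?thesis using x by (intro exI[of _ x]) auto
qed


lemma kpow: "k \<ge> 6 \<Longrightarrow> real k * (5/8)^(k-3) \<le> 3/2"
proof (induction k rule: dec_induct)
  case base then show ?case by (simp add: power3_eq_cube)
next
  case (step k)
  define q :: real where "q = (5/8)^(k-3)"
  have q0: "q \<ge> 0" unfolding q_def by simp
  have "q \<le> (5/8)^3" unfolding q_def using step(1) by (intro power_decreasing) auto
  moreover have "(5/8::real)^3 \<le> 1/4" by (simp add: power3_eq_cube)
  ultimately have q1: "q \<le> 1/4" by linarith
  have "Suc k - 3 = Suc (k - 3)" using step(1) by simp
  then have "real (Suc k) * (5/8)^(Suc k - 3) = (real k * q + q) * (5/8)"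
    unfolding q_def by (simp add: algebra_simps)
  also have "\<dots> \<le> (3/2 + 1/4) * (5/8)" using step(3) q1 unfolding q_def[symmetric]
    by (intro mult_right_mono add_mono) auto
  also have "\<dots> \<le> 3/2" by simp
  finally show ?case .
qed

lemma h_mono:
  fixes c t1 t2 :: real and k :: nat
  assumes k: "k \<ge> 6" and c: "c \<ge> 0.8" and t: "0 < t1" "t1 < t2" "t2 \<le> 0.625"
  shows "c * t1^3 - t1^k < c * t2^3 - t2^k"
proof -
  have "(\<lambda>t. c * t^3 - t^k) t1 < (\<lambda>t. c * t^3 - t^k) t2"
  proof (rule DERIV_pos_imp_increasing[OF t(2)])
    fix x assume x: "t1 \<le> x" "x \<le> t2"
    have x0: "x > 0" and x1: "x \<le> 5/8" using x t by auto
    have d: "DERIV (\<lambda>t. c * t^3 - t^k) x :> c * (3 * x^2) - real k * x^(k-1)"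
      by (auto intro!: derivative_eq_intros)
    have pw: "x^(k-3) \<le> (5/8)^(k-3)" using x0 x1 by (intro power_mono) auto
    have "real k * x^(k-3) \<le> real k * (5/8)^(k-3)" using pw by (intro mult_left_mono) auto
    also have "\<dots> \<le> 3/2" using kpow[OF k] .
    finally have kx: "real k * x^(k-3) \<le> 3/2" .
    have xk: "x^(k-1) = x^2 * x^(k-3)"
    proof -
      have "k - 1 = 2 + (k - 3)" using k by simp
      then show ?thesis by (simp add: power_add power2_eq_square)
    qed
    have "c * (3 * x^2) - real k * x^(k-1) = x^2 * (3 * c - real k * x^(k-3))"
      unfolding xk by (simp add: algebra_simps)
    also have "\<dots> > 0" using kx c x0 by (intro mult_pos_pos) auto
    finally show "\<exists>y. DERIV (\<lambda>t. c * t^3 - t^k) x :> y \<and> y > 0" using d by blast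
  qed
  then show ?thesis by simp
qed

lemma F_decomp:
  fixes k :: nat and e :: real
  assumes "cos e > 0"
  defines "r \<equiv> 1 / (2 * cos e)"
  defines "ph \<equiv> pi - (real k - 1) * e"
  shows "F k e = sin ph * (1 - r^4 - r^2/2) - sin e * (r^3 * cos ph - r^k)"
proof -
  have s1: "sin ((real k - 1) * e) = sin ph" unfolding ph_def by simp
  have "(real k - 2) * e = pi - (ph + e)" unfolding ph_def by (simp add: algebra_simps)
  then have s2: "sin ((real k - 2) * e) = sin ph * cos e + cos ph * sin e"
    by (simp add: sin_add)
  have rc: "r^3 * cos e = r^2 / 2" unfolding r_def using assms(1)
    by (simp add: power3_eq_cube power2_eq_square field_simps)
  have "F k e = (1 - r^4) * sin ph - r^3 * (sin ph * cos e + cos ph * sin e) + r^k * sin e"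
    unfolding F_def s1 s2 r_def ..
  also have "\<dots> = (1 - r^4) * sin ph - (r^3 * cos e) * sin ph - r^3 * cos ph * sin e + r^k * sin e"
    by (simp add: algebra_simps)
  also have "\<dots> = sin ph * (1 - r^4 - r^2/2) - sin e * (r^3 * cos ph - r^k)"
    unfolding rc by (simp add: algebra_simps)
  finally show ?thesis .
qed

lemma cos_08: "0 \<le> x \<Longrightarrow> x < pi / 5 \<Longrightarrow> cos x > 0.8"
proof -
  assume x: "0 \<le> x" "x < pi / 5"
  have "pi \<le> 3.1416" using pi_approx(2) by simp
  then have x2: "x < 0.62832" using x by simp
  have "x^2 \<le> 0.62832^2" using x x2 by (intro power_mono) auto
  then have "1 - x^2/2 > 0.8" by (simp add: power_divide)
  then show ?thesis using cos_lb[of x] by simp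
qed

lemma F_decr6:
  assumes k: "k \<ge> 6" and e: "pi / real k < e1" "e1 < e2" "e2 < pi / (real k - 1)"
  shows "F k e2 < F k e1"
proof -
  have k1: "real k - 1 \<ge> 5" using k by simp
  have kp: "real k > 0" using k by simp
  have b5: "pi / (real k - 1) \<le> pi / 5" using k1 by (intro divide_left_mono) auto
  have b0: "0 < pi / real k" using kp by simp
  have e10: "0 < e1" and e25: "e2 < pi/5" using e b5 b0 by linarith+
  have c1: "cos e1 > 0.8" using cos_08[of e1] e10 e e25 by simp
  have c2: "cos e2 > 0.8" using cos_08[of e2] e10 e e25 by simp
  have c12: "cos e2 < cos e1" using e10 e e25 by (intro cos_monotone_0_pi) auto
  define r1 where "r1 = 1 / (2 * cos e1)"
  define r2 where "r2 = 1 / (2 * cos e2)"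
  define p1 where "p1 = pi - (real k - 1) * e1"
  define p2 where "p2 = pi - (real k - 1) * e2"
  have r1p: "r1 > 0" unfolding r1_def using c1 by simp
  have r12: "r1 < r2" unfolding r1_def r2_def using c2 c12 by (simp add: field_simps)
  have r2b: "r2 \<le> 0.625" unfolding r2_def using c2 by (simp add: field_simps)
  have p12: "p2 < p1" unfolding p1_def p2_def using e k1 by (simp add: mult_strict_left_mono)
  have p20: "0 < p2"
  proof -
    have "(real k - 1) * e2 < (real k - 1) * (pi / (real k - 1))" using e k1 by (intro mult_strict_left_mono) auto
    then show ?thesis unfolding p2_def using k1 by simp
  qed
  have p1b: "p1 < pi / 5"
  proof -
    have "(real k - 1) * (pi / real k) < (real k - 1) * e1" using e k1 by (intro mult_strict_left_mono) auto
    moreover have "(real k - 1) * (pi / real k) = pi - pi / real k" using kp by (simp add: field_simps)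
    moreover have "pi / real k \<le> pi / 6" using k by (intro divide_left_mono) auto
    ultimately show ?thesis unfolding p1_def using pi_gt_zero by linarith
  qed
  have cp1: "cos p1 > 0.8" using cos_08[of p1] p1b p12 p20 by simp
  have cp12: "cos p1 < cos p2" using p12 p20 p1b by (intro cos_monotone_0_pi) auto
  have sp12: "sin p2 < sin p1" using p12 p20 p1b by (intro sin_monotone_2pi) auto
  have sp2: "sin p2 \<ge> 0" using p20 p1b p12 by (intro sin_ge_zero) auto
  have se12: "sin e1 < sin e2" using e10 e e25 by (intro sin_monotone_2pi) auto
  have se1: "sin e1 > 0" using e10 e e25 by (intro sin_gt_zero) auto
  define D1 where "D1 = 1 - r1^4 - r1^2/2"
  define D2 where "D2 = 1 - r2^4 - r2^2/2"
  have D12: "D2 < D1"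
  proof -
    have "r1^4 < r2^4" using r1p r12 by (intro power_strict_mono) auto
    moreover have "r1^2 < r2^2" using r1p r12 by (intro power_strict_mono) auto
    ultimately show ?thesis unfolding D1_def D2_def by simp
  qed
  have D2p: "D2 > 0"
  proof -
    have "r2^2 \<le> 0.625^2" using r2b r1p r12 by (intro power_mono) auto
    moreover have "r2^4 \<le> 0.625^4" using r2b r1p r12 by (intro power_mono) auto
    ultimately show ?thesis unfolding D2_def by (simp add: eval_nat_numeral)
  qed
  have T1: "sin p2 * D2 < sin p1 * D1"
  proof -
    have "sin p2 * D2 \<le> sin p2 * D1" using sp2 D12 by (intro mult_left_mono) auto
    also have "\<dots> < sin p1 * D1" using sp12 D12 D2p by (intro mult_strict_right_mono) auto
    finally show ?thesis .
  qed
  define g1 where "g1 = r1^3 * cos p1 - r1^k"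
  define g2 where "g2 = r2^3 * cos p2 - r2^k"
  have r1lt: "r1 < 1" using r12 r2b by simp
  have g1p: "g1 > 0"
  proof -
    have "r1^k \<le> r1^6" using r1p r1lt k by (intro power_decreasing) auto
    also have "\<dots> = r1^3 * r1^3" by simp
    also have "\<dots> < r1^3 * cos p1"
    proof -
      have "r1^3 \<le> (5/8)^3" using r1p r12 r2b by (intro power_mono) auto
      moreover have "(5/8::real)^3 \<le> 1/4" by (simp add: power3_eq_cube)
      ultimately have "r1^3 < cos p1" using cp1 by linarith
      then show ?thesis using r1p by (intro mult_strict_left_mono) auto
    qed
    finally show ?thesis unfolding g1_def by simp
  qed
  have g12: "g1 \<le> g2"
  proof -
    have "g1 < cos p1 * r2^3 - r2^k" unfolding g1_def
      using h_mono[OF k _ r1p r12 r2b, of "cos p1"] cp1 by (simp add: mult.commute)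
    also have "\<dots> \<le> g2" unfolding g2_def using cp12 r1p r12
      by (simp add: mult.commute mult_left_mono)
    finally show ?thesis by simp
  qed
  have T2: "sin e1 * g1 < sin e2 * g2"
  proof -
    have "sin e1 * g1 < sin e2 * g1" using se12 g1p by simp
    also have "\<dots> \<le> sin e2 * g2" using g12 se1 se12 by (intro mult_left_mono) auto
    finally show ?thesis .
  qed
  have F1: "F k e1 = sin p1 * D1 - sin e1 * g1"
    unfolding D1_def g1_def r1_def p1_def using F_decomp c1 by simp
  have F2: "F k e2 = sin p2 * D2 - sin e2 * g2"
    unfolding D2_def g2_def r2_def p2_def using F_decomp c2 by simp
  show ?thesis unfolding F1 F2 using T1 T2 by simp
qed


lemma sin3: "sin (3 * (e::real)) = sin e * (4 * (cos e)^2 - 1)"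
proof -
  have t: "3 * e = 2 * e + e" by simp
  have "sin (3 * e) = sin (2 * e) * cos e + cos (2 * e) * sin e" unfolding t by (rule sin_add)
  also have "\<dots> = (2 * sin e * cos e) * cos e + (2 * (cos e)^2 - 1) * sin e"
    by (simp only: sin_double cos_double_cos)
  also have "\<dots> = sin e * (4 * (cos e)^2 - 1)" by (simp add: power2_eq_square algebra_simps)
  finally show ?thesis .
qed

lemma sin4: "sin (4 * (e::real)) = 4 * sin e * cos e * (2 * (cos e)^2 - 1)"
proof -
  have t: "4 * e = 2 * (2 * e)" by simp
  have "sin (4 * e) = 2 * sin (2*e) * cos (2*e)" unfolding t by (rule sin_double)
  also have "\<dots> = 2 * (2 * sin e * cos e) * (2 * (cos e)^2 - 1)"
    by (simp only: sin_double cos_double_cos)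
  also have "\<dots> = 4 * sin e * cos e * (2 * (cos e)^2 - 1)" by simp
  finally show ?thesis .
qed

definition P5 :: "real \<Rightarrow> real" where
  "P5 y = 256*y^4 - 128*y^3 - 32*y^2 + 12*y + 1"

lemma F5_poly:
  assumes "cos e > 0"
  shows "F 5 e * (32 * cos e ^ 5) = sin e * P5 ((cos e)^2)"
proof -
  define x where "x = cos e"
  define s where "s = sin e"
  have x0: "x > 0" using assms x_def by simp
  have a1: "(real 5 - 1) * e = 4 * e" by simp
  have a2: "(real 5 - 2) * e = 3 * e" by simp
  have FF: "F 5 e = (1 - (1/(2*x))^4) * (4 * s * x * (2 * x^2 - 1)) - (1/(2*x))^3 * (s * (4 * x^2 - 1))
      + (1/(2*x))^5 * s"
    unfolding F_def a1 a2 sin3 sin4 x_def s_def ..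
  have "F 5 e * (32 * x^5) = (32*x^5 - 2*x) * (4 * s * x * (2 * x^2 - 1)) - 4*x^2 * (s * (4 * x^2 - 1)) + s"
    using x0 unfolding FF by (simp add: field_simps power_divide eval_nat_numeral)
  also have "\<dots> = s * P5 (x^2)" unfolding P5_def by (simp add: algebra_simps eval_nat_numeral)
  finally show ?thesis unfolding x_def s_def .
qed

lemma P5_mono:
  assumes "1/2 \<le> y2" "y2 < y1"
  shows "P5 y2 < P5 y1"
proof (rule DERIV_pos_imp_increasing[OF assms(2)])
  fix y assume y: "y2 \<le> y" "y \<le> y1"
  define t where "t = y - 1/2"
  have t0: "t \<ge> 0" using y assms t_def by simp
  have d: "DERIV P5 y :> 1024*y^3 - 384*y^2 - 64*y + 12"
    unfolding P5_def by (auto intro!: derivative_eq_intros simp: eval_nat_numeral)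
  have "1024*y^3 - 384*y^2 - 64*y + 12 = 12 + 320*t + 1152*t^2 + 1024*t^3"
    unfolding t_def by (simp add: power2_eq_square power3_eq_cube algebra_simps)
  also have "\<dots> > 0" using t0 by (simp add: add_pos_nonneg)
  finally show "\<exists>d. DERIV P5 y :> d \<and> d > 0" using d by blast
qed

lemma F4_poly:
  assumes "cos e > 0"
  shows "F 4 e * (16 * cos e ^ 4) = sin e * (4 * (cos e)^2 - 1) * (16 * cos e ^ 4 - 2)"
proof -
  define x where "x = cos e"
  define s where "s = sin e"
  have x0: "x > 0" using assms x_def by simp
  have a1: "(real 4 - 1) * e = 3 * e" by simp
  have a2: "(real 4 - 2) * e = 2 * e" by simp
  have FF: "F 4 e = (1 - (1/(2*x))^4) * (s * (4 * x^2 - 1)) - (1/(2*x))^3 * (2 * s * x)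
      + (1/(2*x))^4 * s"
    unfolding F_def a1 a2 sin3 sin_double x_def s_def ..
  have "F 4 e * (16 * x^4) = (16*x^4 - 1) * (s * (4 * x^2 - 1)) - 2*x * (2 * s * x) + s"
    using x0 unfolding FF by (simp add: field_simps power_divide eval_nat_numeral)
  also have "\<dots> = s * (4 * x^2 - 1) * (16 * x^4 - 2)" by (simp add: algebra_simps eval_nat_numeral)
  finally show ?thesis unfolding x_def s_def .
qed

lemma cos_sq_half: "0 < e \<Longrightarrow> e < pi/4 \<Longrightarrow> (cos e)^2 > 1/2"
proof -
  assume e: "0 < e" "e < pi/4"
  have "cos (pi/4) < cos e" using e by (intro cos_monotone_0_pi) auto
  then have c: "cos e > sqrt 2 / 2" by (simp add: cos_45)
  have "(sqrt 2 / 2)^2 < (cos e)^2" using c by (intro power_strict_mono) auto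
  then show ?thesis by (simp add: power_divide)
qed

lemma no_two_zeros:
  assumes k: "k \<ge> 5" and e: "pi / real k < a" "a < b" "b < pi / (real k - 1)"
    and z: "F k a = 0" "F k b = 0"
  shows False
proof (cases "k = 5")
  case True
  have b4: "b < pi/4" using e True by simp
  have "0 < pi / real k" using k by simp
  then have a0: "0 < a" using e(1) by linarith
  have ca: "cos a > 0" using a0 e b4 by (intro cos_gt_zero_pi) auto
  have cb: "cos b > 0" using a0 e b4 by (intro cos_gt_zero_pi) auto
  have sa: "sin a > 0" using a0 e b4 by (intro sin_gt_zero) auto
  have sb: "sin b > 0" using a0 e b4 by (intro sin_gt_zero) auto
  have pa: "P5 ((cos a)^2) = 0" using F5_poly[OF ca] z(1) sa True by simp
  have pb: "P5 ((cos b)^2) = 0" using F5_poly[OF cb] z(2) sb True by simp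
  have cab: "cos b < cos a" using a0 e b4 by (intro cos_monotone_0_pi) auto
  have "(cos b)^2 < (cos a)^2" using cab cb by (intro power_strict_mono) auto
  moreover have "(cos b)^2 > 1/2" using cos_sq_half[of b] a0 e b4 by simp
  ultimately have "P5 ((cos b)^2) < P5 ((cos a)^2)" by (intro P5_mono) auto
  then show False using pa pb by simp
next
  case False
  then have "k \<ge> 6" using k by simp
  from F_decr6[OF this e] z show False by simp
qed

lemma eta_ge5:
  assumes k: "k \<ge> 5"
  shows "pi / real k < eta_k k \<and> eta_k k < pi / (real k - 1)"
proof -
  define P where "P = (\<lambda>e. e \<in> {pi / real k <..< pi / (real k - 1)} \<and> Phi k e = 0)"
  have k1: "real k - 1 \<ge> 4" using k by simp
  have cpos: "cos e > 0" if "e \<in> {pi / real k <..< pi / (real k - 1)}" for e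
  proof -
    have "pi / (real k - 1) \<le> pi / 4" using k1 by (intro divide_left_mono) auto
    moreover have "0 < pi / real k" using k by simp
    moreover have "pi / real k < e" "e < pi / (real k - 1)" using that by auto
    ultimately have "0 < e" "e < pi/2" using pi_gt_zero by linarith+
    then show ?thesis by (intro cos_gt_zero_pi) auto
  qed
  have ex: "\<exists>e. P e"
  proof -
    obtain e where e: "pi / real k < e" "e < pi / (real k - 1)" "F k e = 0" using F_exists[OF k] by blast
    then have "Phi k e = 0" using Phi_F[OF cpos] by simp
    then show ?thesis unfolding P_def using e by (intro exI[of _ e]) auto
  qed
  have un: "a = b" if "P a" "P b" for a b
  proof -
    have za: "F k a = 0" using that(1) Phi_F[OF cpos] unfolding P_def by auto
    have zb: "F k b = 0" using that(2) Phi_F[OF cpos] unfolding P_def by auto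
    show ?thesis
    proof (rule ccontr)
      assume "a \<noteq> b"
      then consider "a < b" | "b < a" by linarith
      then show False
      proof cases
        case 1 then show False using no_two_zeros[OF k _ 1 _ za zb] that unfolding P_def by auto
      next
        case 2 then show False using no_two_zeros[OF k _ 2 _ zb za] that unfolding P_def by auto
      qed
    qed
  qed
  have "\<exists>!e. P e" using ex un by blast
  then have "P (THE e. P e)" by (rule theI')
  moreover have "eta_k k = (THE e. P e)" unfolding eta_k_def P_def ..
  ultimately show ?thesis unfolding P_def by simp
qed

lemma eta_4: "pi/4 < eta_k 4 \<and> eta_k 4 < pi/3 \<and> cos (eta_k 4) ^ 4 = 1/8"
proof -
  define P where "P = (\<lambda>e. e \<in> {pi / real (4::nat) <..< pi / (real (4::nat) - 1)} \<and> Phi 4 e = 0)"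
  have Pi: "P e \<longleftrightarrow> pi/4 < e \<and> e < pi/3 \<and> cos e ^ 4 = 1/8" for e
  proof
    assume "P e"
    then have e: "pi/4 < e" "e < pi/3" and z: "Phi 4 e = 0" unfolding P_def by auto
    have c: "cos e > 1/2" using cos_monotone_0_pi[of e "pi/3"] e by (simp add: cos_60)
    then have c0: "cos e > 0" by simp
    have s: "sin e > 0" using e by (intro sin_gt_zero) auto
    have "(1/2)^2 < (cos e)^2" using c by (intro power_strict_mono) auto
    then have q: "4 * (cos e)^2 - 1 > 0" by (simp add: power_divide)
    have "sin e * (4 * (cos e)^2 - 1) * (16 * cos e ^ 4 - 2) = 0"
      using F4_poly[OF c0] z Phi_F[OF c0] by simp
    then have "16 * cos e ^ 4 - 2 = 0" using s q by simp
    then show "pi/4 < e \<and> e < pi/3 \<and> cos e ^ 4 = 1/8" using e by simp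
  next
    assume h: "pi/4 < e \<and> e < pi/3 \<and> cos e ^ 4 = 1/8"
    have c: "cos e > 1/2" using cos_monotone_0_pi[of e "pi/3"] h by (simp add: cos_60)
    then have c0: "cos e > 0" by simp
    have "F 4 e * (16 * cos e ^ 4) = 0" using F4_poly[OF c0] h by simp
    then have "F 4 e = 0" using c0 by simp
    then show "P e" unfolding P_def using h Phi_F[OF c0] by simp
  qed
  have ex: "\<exists>e. P e"
  proof -
    have cont: "\<forall>x. pi/4 \<le> x \<and> x \<le> pi/3 \<longrightarrow> isCont (\<lambda>e. cos e ^ 4) x"
      by (intro allI impI continuous_intros)
    have v4: "cos (pi/4) ^ 4 = 1/4"
    proof -
      have "cos (pi/4) ^ 4 = ((sqrt 2 / 2)^2)^2" by (simp add: cos_45)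
      also have "\<dots> = 1/4" by (simp add: power_divide)
      finally show ?thesis .
    qed
    have v3: "cos (pi/3) ^ 4 = 1/16" by (simp add: cos_60 power_divide)
    have "\<exists>x. pi/4 \<le> x \<and> x \<le> pi/3 \<and> cos x ^ 4 = 1/8"
      using v4 v3 cont by (intro IVT2) auto
    then obtain x where x: "pi/4 \<le> x" "x \<le> pi/3" "cos x ^ 4 = 1/8" by blast
    have "x \<noteq> pi/4"
    proof
      assume "x = pi/4"
      then have "cos x ^ 4 = 1/4" using v4 by (simp only:)
      then show False using x(3) by simp
    qed
    moreover have "x \<noteq> pi/3"
    proof
      assume "x = pi/3"
      then have "cos x ^ 4 = 1/16" using v3 by (simp only:)
      then show False using x(3) by simp
    qed
    ultimately have "P x" using x Pi by auto
    then show ?thesis by blast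
  qed
  have un: "a = b" if "P a" "P b" for a b
  proof -
    have a: "pi/4 < a" "a < pi/3" "cos a ^ 4 = 1/8" using that(1) Pi by auto
    have b: "pi/4 < b" "b < pi/3" "cos b ^ 4 = 1/8" using that(2) Pi by auto
    have ca: "cos a > 0" using a by (intro cos_gt_zero_pi) auto
    have cb: "cos b > 0" using b by (intro cos_gt_zero_pi) auto
    have "cos a ^ 4 = cos b ^ 4" using a(3) b(3) by simp
    then have "cos a = cos b" by (rule power_eq_imp_eq_base) (use ca cb in auto)
    moreover have "0 \<le> a" "a \<le> pi" "0 \<le> b" "b \<le> pi" using a b pi_gt_zero by linarith+
    ultimately show ?thesis using cos_inj_pi by blast
  qed
  have "\<exists>!e. P e" using ex un by blast
  then have "P (THE e. P e)" by (rule theI')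
  moreover have "eta_k 4 = (THE e. P e)" unfolding eta_k_def P_def ..
  ultimately show ?thesis using Pi by simp
qed

theorem lemma5p2:
  fixes k j :: nat and \<eta> :: real
  assumes "k \<ge> 4"
    and "0 < \<eta>" and "\<eta> < pi / 3"
    and "eta_k (k + 1) \<le> \<eta>" and "\<eta> < eta_k k"
    and "j \<ge> k"
  shows "angle3 1 (zz \<eta> j) (w1 \<eta>) \<in> {0<..<pi}"
proof -
  have c4: "cos \<eta> ^ 4 > 1/8"
  proof (cases "k = 4")
    case True
    have h: "\<eta> < eta_k 4" using assms(5) True by simp
    have e4: "pi/4 < eta_k 4" "eta_k 4 < pi/3" "cos (eta_k 4) ^ 4 = 1/8" using eta_4 by auto
    have "cos (eta_k 4) < cos \<eta>" using h assms(2) e4 by (intro cos_monotone_0_pi) auto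
    moreover have "cos (eta_k 4) > 0" using e4 by (intro cos_gt_zero_pi) auto
    ultimately have "cos (eta_k 4) ^ 4 < cos \<eta> ^ 4" by (intro power_strict_mono) auto
    then show ?thesis using e4 by simp
  next
    case False
    then have k5: "k \<ge> 5" using assms(1) by simp
    have "eta_k k < pi / (real k - 1)" using eta_ge5[OF k5] by simp
    moreover have "pi / (real k - 1) \<le> pi / 4" using k5 by (intro divide_left_mono) auto
    ultimately have "\<eta> < pi/4" using assms(5) by linarith
    then have "(cos \<eta>)^2 > 1/2" using cos_sq_half assms(2) by simp
    then have "((cos \<eta>)^2)^2 > (1/2)^2" by (intro power_strict_mono) auto
    then show ?thesis by (simp add: power_divide)
  qed
  show ?thesis using geo[OF assms(2) assms(3) c4] assms(1) assms(6) by simp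
qed

end
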